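(* Let $n \ge 2$ and let $C = (w_1, w_2, \dots, w_{2^n}, w_1)$ be a Hamiltonian cycle of the $n$-dimensional hypercube on vertex set $\{0,1\}^n$ (i.e. a cyclic Gray code: the $w_k$ are pairwise distinct, and consecutive words $w_k, w_{k+1}$, as well as $w_{2^n}, w_1$, differ in exactly one bit position). Let $f_C:\{0,1\}^n\to\{0,1\}^n$ be the Boolean map defined componentwise by $(f_C)_i(x) = x_i$ if the arc from $x$ to $x$ with bit $i$ flipped is one of the arcs $w_k\to w_{k+1}$ ($1\le k<2^n$) or $w_{2^n}\to w_1$ of $C$, and $(f_C)_i(x) = \overline{x_i}$ otherwise; thus $\Gamma(f_C)$ is the directed $n$-cube with the arcs of $C$ removed (and loops added). Then the iteration graph $\Gamma(f_C)$ is strongly connected.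
   Context: The directed $n$-cube has vertex set $\{0,1\}^n$ and an arc from $x$ to $y$ whenever $x$ and $y$ differ in exactly one bit (in both directions). For a Boolean map $f=(f_1,\dots,f_n):\{0,1\}^n\to\{0,1\}^n$, define $F_f(i,x) = (x_1,\dots,x_{i-1},f_i(x),x_{i+1},\dots,x_n)$ for $i\in\{1,\dots,n\}$. The iteration graph $\Gamma(f)$ is the directed graph with vertex set $\{0,1\}^n$ containing, for every $x$ and every $i$, an arc from $x$ to $F_f(i,x)$. A directed graph is strongly connected if every vertex can be reached from every other vertex by a directed path. *)

theory Defs
  imports Main
begin

text \<open>Vertices of the n-cube: boolean lists of length n; bit positions 0..n-1
  (the paper's positions 1..n shifted by one).\<close>

definition cube :: "nat \<Rightarrow> bool list set" where
  "cube n = {x. length x = n}"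

definition flip :: "bool list \<Rightarrow> nat \<Rightarrow> bool list" where
  "flip x i = x[i := \<not> x ! i]"

definition differ_in_one_bit :: "nat \<Rightarrow> bool list \<Rightarrow> bool list \<Rightarrow> bool" where
  "differ_in_one_bit n x y \<longleftrightarrow> card {i. i < n \<and> x ! i \<noteq> y ! i} = 1"

definition hamiltonian_cycle :: "nat \<Rightarrow> (nat \<Rightarrow> bool list) \<Rightarrow> bool" where
  "hamiltonian_cycle n w \<longleftrightarrow>
     (\<forall>k < 2 ^ n. w k \<in> cube n) \<and>
     inj_on w {..< 2 ^ n} \<and>
     (\<forall>k < 2 ^ n. differ_in_one_bit n (w k) (w ((k + 1) mod 2 ^ n)))"

text \<open>The map f_C, given componentwise: fC n w i x is (f_C)_i(x).\<close>
definition fC :: "nat \<Rightarrow> (nat \<Rightarrow> bool list) \<Rightarrow> nat \<Rightarrow> bool list \<Rightarrow> bool" where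
  "fC n w i x =
     (if \<exists>k < 2 ^ n. w k = x \<and> w ((k + 1) mod 2 ^ n) = flip x i
      then x ! i else \<not> x ! i)"

definition F_f :: "(nat \<Rightarrow> bool list \<Rightarrow> bool) \<Rightarrow> nat \<Rightarrow> bool list \<Rightarrow> bool list" where
  "F_f f i x = x[i := f i x]"

definition iteration_graph :: "nat \<Rightarrow> (nat \<Rightarrow> bool list \<Rightarrow> bool) \<Rightarrow> (bool list \<times> bool list) set" where
  "iteration_graph n f = {(x, F_f f i x) | x i. x \<in> cube n \<and> i < n}"

definition strongly_connected_on :: "bool list set \<Rightarrow> (bool list \<times> bool list) set \<Rightarrow> bool" where
  "strongly_connected_on V E \<longleftrightarrow> (\<forall>x\<in>V. \<forall>y\<in>V. (x, y) \<in> E\<^sup>*)"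

end

theory Submission
  imports Defs
begin

lemma card_cube: "card (cube n) = 2 ^ n"
proof -
  have "cube n = {xs. set xs \<subseteq> (UNIV::bool set) \<and> length xs = n}" by (auto simp: cube_def)
  then show ?thesis using card_lists_length_eq[of "UNIV::bool set" n] by simp
qed

lemma finite_cube: "finite (cube n)"
proof -
  have "cube n = {xs. set xs \<subseteq> (UNIV::bool set) \<and> length xs = n}" by (auto simp: cube_def)
  then show ?thesis using finite_lists_length_eq[of "UNIV::bool set" n] by simp
qed

lemma one_bit_flip:
  assumes "length x = n" "length y = n" "differ_in_one_bit n x y"
  shows "\<exists>i<n. y = flip x i"
proof -
  from assms(3) obtain i where S: "{i. i < n \<and> x ! i \<noteq> y ! i} = {i}"
    unfolding differ_in_one_bit_def by (auto simp: card_Suc_eq)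
  hence i: "i < n" "x ! i \<noteq> y ! i" by auto
  have "y = flip x i"
  proof (rule nth_equalityI)
    show "length y = length (flip x i)" using assms by (simp add: flip_def)
    fix j assume "j < length y"
    with assms S i show "y ! j = flip x i ! j"
      by (cases "j = i") (auto simp: flip_def)
  qed
  with i show ?thesis by blast
qed

theorem theorem2:
  fixes n :: nat and w :: "nat \<Rightarrow> bool list"
  assumes "n \<ge> 2"
    and "hamiltonian_cycle n w"
  shows "strongly_connected_on (cube n) (iteration_graph n (fC n w))"
proof -
  define N where "N = (2::nat) ^ n"
  have N4: "N \<ge> 4"
  proof -
    have "(2::nat)^2 \<le> 2^n" using assms(1) by (rule power_increasing) simp
    thus ?thesis by (simp add: N_def)
  qed
  have wc: "\<And>k. k < N \<Longrightarrow> w k \<in> cube n" and inj: "inj_on w {..<N}"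
    and d: "\<And>k. k < N \<Longrightarrow> differ_in_one_bit n (w k) (w ((k + 1) mod N))"
    using assms(2) unfolding hamiltonian_cycle_def N_def by auto
  let ?E = "iteration_graph n (fC n w)"
  have img: "w ` {..<N} = cube n"
  proof (rule card_subset_eq[OF finite_cube])
    show "w ` {..<N} \<subseteq> cube n" using wc by auto
    show "card (w ` {..<N}) = card (cube n)"
      using card_image[OF inj] card_cube by (simp add: N_def)
  qed
  have step: "(w ((k + 1) mod N), w k) \<in> ?E" if k: "k < N" for k
  proof -
    define x where "x = w ((k + 1) mod N)"
    have k1: "(k + 1) mod N < N" using N4 by simp
    have xc: "x \<in> cube n" using wc[OF k1] by (simp add: x_def)
    have "differ_in_one_bit n (w k) x" using d[OF k] by (simp add: x_def)
    then obtain i where i: "i < n" "x = flip (w k) i"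
      using one_bit_flip[of "w k" n x] wc[OF k] xc unfolding cube_def by blast
    have lw: "length (w k) = n" using wc[OF k] by (simp add: cube_def)
    have fl: "flip x i = w k" using i lw
      by (auto simp: flip_def list_update_overwrite intro!: nth_equalityI)
    have nf: "fC n w i x = (\<not> x ! i)"
    proof -
      have "\<not> (\<exists>j<N. w j = x \<and> w ((j + 1) mod N) = flip x i)"
      proof
        assume "\<exists>j<N. w j = x \<and> w ((j + 1) mod N) = flip x i"
        then obtain j where j: "j < N" "w j = x" "w ((j + 1) mod N) = w k" using fl by auto
        have "j = (k + 1) mod N" using inj_onD[OF inj, of j "(k + 1) mod N"] j k1 unfolding x_def by simp
        moreover have "(j + 1) mod N < N" using N4 by simp
        hence "(j + 1) mod N = k" using inj_onD[OF inj, of "(j + 1) mod N" k] j k by simp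
        ultimately have "(k + 2) mod N = k" by (simp add: mod_Suc_eq)
        moreover have "k + 2 \<noteq> k" by simp
        ultimately show False using k N4
        proof (cases "k + 2 < N")
          case False
          hence "(k + 2) mod N = k + 2 - N" using k N4 by (simp add: le_mod_geq)
          thus ?thesis using \<open>(k + 2) mod N = k\<close> False k N4 by linarith
        qed simp
      qed
      thus ?thesis unfolding fC_def N_def[symmetric] by simp
    qed
    have "F_f (fC n w) i x = w k" using nf fl by (simp add: F_f_def flip_def)
    hence "(x, w k) \<in> ?E" using xc i(1) unfolding iteration_graph_def by force
    thus ?thesis by (simp add: x_def)
  qed
  have reach: "(w ((k + m) mod N), w k) \<in> ?E\<^sup>*" if "k < N" for k m
  proof (induction m)
    case 0 thus ?case using that by simp
  next
    case (Suc m)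
    have "(w (((k + m) mod N + 1) mod N), w ((k + m) mod N)) \<in> ?E"
      using step N4 by simp
    moreover have "((k + m) mod N + 1) mod N = (k + Suc m) mod N" by (simp add: mod_Suc_eq)
    ultimately show ?case using Suc by (metis converse_rtrancl_into_rtrancl)
  qed
  show ?thesis unfolding strongly_connected_on_def
  proof (intro ballI)
    fix x y assume "x \<in> cube n" "y \<in> cube n"
    then obtain j k where "j < N" "k < N" "x = w j" "y = w k"
      using img by (metis imageE lessThan_iff)
    moreover have "(k + (j + N - k)) mod N = j" using \<open>j < N\<close> \<open>k < N\<close> by simp
    ultimately show "(x, y) \<in> ?E\<^sup>*" using reach[of k "j + N - k"] by metis
  qed
qed

end
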